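(* Let $\Omega\subset\mathbb{R}^2$ be a compact set that can be covered by at most $|\Omega|+\epsilon_1$ squares $Q_1(m)$, $m\in\mathbb{Z}^2$, for some $\epsilon_1\ge0$. Let $\Lambda_\Omega=\{\lambda_j\}_{j=1}^r$ be a finite sequence of independent and identically distributed random variables uniformly distributed in $\Omega$, let $N_0=\sup_{m\in\mathbb{Z}^2}\#(\Lambda_\Omega\cap Q_1(m))$, and let $a>|\Omega|^{-1}$. Then $$\mathbb{P}(N_0>ar)\le(|\Omega|+\epsilon_1)\exp\Big(-r\big(a\ln(a|\Omega|)-(a-|\Omega|^{-1})\big)\Big).$$
   Context: $Q_1(m)=[m_1-\tfrac12,m_1+\tfrac12]\times[m_2-\tfrac12,m_2+\tfrac12]$ for $m=(m_1,m_2)\in\mathbb{Z}^2$; $|\Omega|$ is the Lebesgue measure of $\Omega$. *)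

theory Defs
  imports "HOL-Probability.Probability"
begin

definition Q1 :: "int \<times> int \<Rightarrow> (real \<times> real) set" where
  "Q1 m = {real_of_int (fst m) - 1/2 .. real_of_int (fst m) + 1/2} \<times>
          {real_of_int (snd m) - 1/2 .. real_of_int (snd m) + 1/2}"

text \<open>N_0 = sup over m of the number of indices j < r with lambda_j in Q1 m
  (points counted with multiplicity as a sequence).\<close>
definition N0 :: "nat \<Rightarrow> (nat \<Rightarrow> real \<times> real) \<Rightarrow> nat" where
  "N0 r lam = Sup (range (\<lambda>m. card {j \<in> {..<r}. lam j \<in> Q1 m}))"

end

theory Submission
  imports Defs
begin
lemma (in prob_space) chernoff_count:
  fixes X :: "nat \<Rightarrow> 'a \<Rightarrow> real \<times> real"
  assumes indep: "indep_vars (\<lambda>_. lborel) X {..<r}"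
    and Q: "Q \<in> sets borel" and t: "t > 0" and q: "q \<ge> 0"
    and p: "\<And>j. j < r \<Longrightarrow> prob (X j -` Q \<inter> space M) \<le> q"
  shows "prob {\<omega>\<in>space M. c \<le> (\<Sum>j<r. indicator Q (X j \<omega>) :: real)}
           \<le> exp (-t*c) * exp (real r * (q * (exp t - 1)))"
proof -
  have rv: "X j \<in> measurable M borel" if "j < r" for j
    using indep that unfolding indep_vars_def by auto
  have im: "(\<lambda>\<omega>. indicator Q (X j \<omega>) :: real) \<in> borel_measurable M" if "j < r" for j
    using measurable_compose[OF rv[OF that] borel_measurable_indicator[OF Q]] by (simp add: comp_def)
  define S where "S \<omega> = (\<Sum>j<r. indicator Q (X j \<omega>) :: real)" for \<omega>
  have Sm: "S \<in> borel_measurable M"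
    unfolding S_def by (intro borel_measurable_sum) (use im in auto)
  have Ym: "(\<lambda>x. ennreal (exp (t * indicator Q x))) \<in> measurable lborel borel"
    using Q by (intro measurable_compose[OF _ measurable_ennreal] borel_measurable_exp
                 borel_measurable_times borel_measurable_const) (auto simp: borel_measurable_indicator)
  have fac: "(\<integral>\<^sup>+\<omega>. ennreal (exp (t * indicator Q (X j \<omega>))) \<partial>M) \<le> ennreal (1 + (exp t - 1) * q)"
    if j: "j < r" for j
  proof -
    define A where "A = X j -` Q \<inter> space M"
    have A: "A \<in> events" unfolding A_def using rv[OF j] Q by (auto intro: measurable_sets)
    have et: "exp t - 1 \<ge> 0" using t by simp
    have "(\<integral>\<^sup>+\<omega>. ennreal (exp (t * indicator Q (X j \<omega>))) \<partial>M)
        = (\<integral>\<^sup>+\<omega>. 1 + ennreal (exp t - 1) * indicator A \<omega> \<partial>M)"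
    proof (intro nn_integral_cong)
      fix \<omega>
      have e1: "ennreal (exp t) = 1 + ennreal (exp t - 1)"
        using et ennreal_plus[of 1 "exp t - 1"] by simp
      show "ennreal (exp (t * indicator Q (X j \<omega>))) = 1 + ennreal (exp t - 1) * indicator A \<omega>"
        if "\<omega> \<in> space M" using that e1 by (auto simp: A_def indicator_def)
    qed
    also have "\<dots> = 1 + ennreal (exp t - 1) * emeasure M A"
      using A by (subst nn_integral_add) (auto simp: nn_integral_cmult_indicator emeasure_space_1)
    also have "\<dots> = ennreal (1 + (exp t - 1) * prob A)"
      using et by (simp add: emeasure_eq_measure ennreal_plus ennreal_mult flip: ennreal_1)
    also have "\<dots> \<le> ennreal (1 + (exp t - 1) * q)"
      using p[OF j] et by (intro ennreal_leI add_left_mono mult_left_mono) (auto simp: A_def)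
    finally show ?thesis .
  qed
  have "ennreal (prob {\<omega>\<in>space M. c \<le> S \<omega>}) = emeasure M {\<omega>\<in>space M. c \<le> S \<omega>}"
    by (simp add: emeasure_eq_measure)
  also have "\<dots> \<le> ennreal (exp (-t * c)) * (\<integral>\<^sup>+\<omega>. ennreal (exp (t * S \<omega>)) * indicator (space M) \<omega> \<partial>M)"
    using Sm by (intro Chernoff_ineq_nn_integral_ge t) auto
  also have "(\<integral>\<^sup>+\<omega>. ennreal (exp (t * S \<omega>)) * indicator (space M) \<omega> \<partial>M)
      = (\<integral>\<^sup>+\<omega>. (\<Prod>j<r. ennreal (exp (t * indicator Q (X j \<omega>)))) \<partial>M)"
  proof (intro nn_integral_cong)
    fix \<omega> assume "\<omega> \<in> space M"
    have "exp (t * S \<omega>) = (\<Prod>j<r. exp (t * indicator Q (X j \<omega>)))"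
      unfolding S_def sum_distrib_left by (rule exp_sum) simp
    then show "ennreal (exp (t * S \<omega>)) * indicator (space M) \<omega> = (\<Prod>j<r. ennreal (exp (t * indicator Q (X j \<omega>))))"
      using \<open>\<omega> \<in> space M\<close> by (simp add: prod_ennreal)
  qed
  also have "\<dots> = (\<Prod>j<r. \<integral>\<^sup>+\<omega>. ennreal (exp (t * indicator Q (X j \<omega>))) \<partial>M)"
    by (intro indep_vars_nn_integral indep_vars_compose2[OF indep, where Y = "\<lambda>_ x. ennreal (exp (t * indicator Q x))"]) 
       (use Ym in auto)
  also have "ennreal (exp (-t * c)) * \<dots> \<le> ennreal (exp (-t * c)) * (\<Prod>j<r. ennreal (1 + (exp t - 1) * q))"
    by (intro mult_left_mono prod_mono_ennreal fac) auto
  also have "\<dots> = ennreal (exp (-t * c) * (1 + (exp t - 1) * q) ^ r)"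
  proof -
    have "(\<Prod>j<r. ennreal (1 + (exp t - 1) * q)) = ennreal ((1 + (exp t - 1) * q) ^ r)"
      unfolding prod_constant card_lessThan using t q by (intro ennreal_power) simp
    then show ?thesis using t q by (simp add: ennreal_mult)
  qed
  also have "\<dots> \<le> ennreal (exp (-t * c) * exp (real r * (q * (exp t - 1))))"
  proof (intro ennreal_leI mult_left_mono)
    have "(1 + (exp t - 1) * q) ^ r \<le> exp ((exp t - 1) * q) ^ r"
      using t q by (intro power_mono) (use exp_ge_add_one_self[of "(exp t - 1) * q"] in \<open>auto simp: add.commute\<close>)
    also have "\<dots> = exp (real r * (q * (exp t - 1)))"
      by (simp add: exp_of_nat_mult[symmetric] mult_ac)
    finally show "(1 + (exp t - 1) * q) ^ r \<le> exp (real r * (q * (exp t - 1)))" .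
  qed auto
  finally show ?thesis
    by (subst (asm) ennreal_le_iff) (auto simp: S_def)
qed

definition gridL :: "(real \<times> real) set" where
  "gridL = (\<Union>k::int. ({real_of_int k + 1/2} \<times> UNIV) \<union> (UNIV \<times> {real_of_int k + 1/2}))"

lemma gridL_null: "gridL \<in> null_sets lborel"
proof -
  have "gridL \<in> null_sets (lborel \<Otimes>\<^sub>M lborel)"
    unfolding gridL_def
    by (intro null_sets_UN' null_sets.Un lborel.times_in_null_sets1 lborel.times_in_null_sets2)
       (auto simp: null_sets_def)
  then show ?thesis by (simp add: lborel_prod)
qed

lemma Q1_measure: "measure lborel (Q1 m) = 1"
proof -
  have "Q1 m = cbox (real_of_int (fst m) - 1/2, real_of_int (snd m) - 1/2)
                    (real_of_int (fst m) + 1/2, real_of_int (snd m) + 1/2)"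
    unfolding cbox_Pair_eq Q1_def by (simp only: cbox_interval)
  then show ?thesis by (simp only: content_Pair) simp
qed

lemma Q1_closed: "Q1 m \<in> sets borel"
  unfolding Q1_def by (intro borel_closed closed_Times) auto

lemma Q1_unique:
  assumes "x \<in> Q1 m" "x \<in> Q1 c" "x \<notin> gridL"
  shows "m = c"
proof -
  have h: "\<And>k::int. fst x \<noteq> real_of_int k + 1/2 \<and> snd x \<noteq> real_of_int k + 1/2"
    using assms(3) unfolding gridL_def by (cases x) auto
  have key: "i = j" if "real_of_int i - 1/2 \<le> y" "y \<le> real_of_int i + 1/2"
     "real_of_int j - 1/2 \<le> y" "y \<le> real_of_int j + 1/2"
     "\<And>k::int. y \<noteq> real_of_int k + 1/2" for i j :: int and y :: real
  proof -
    have a: "y \<noteq> real_of_int (i - 1) + 1/2" "y \<noteq> real_of_int i + 1/2"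
            "y \<noteq> real_of_int (j - 1) + 1/2" "y \<noteq> real_of_int j + 1/2"
      using that(5) by blast+
    have "real_of_int i < real_of_int j + 1" "real_of_int j < real_of_int i + 1"
      using that a by auto
    then have "i < j + 1" "j < i + 1" by linarith+
    then show ?thesis by simp
  qed
  have "fst m = fst c"
    using assms(1,2) h by (intro key[of _ "fst x"]) (auto simp: Q1_def mem_Times_iff)
  moreover have "snd m = snd c"
    using assms(1,2) h by (intro key[of _ "snd x"]) (auto simp: Q1_def mem_Times_iff)
  ultimately show ?thesis by (simp add: prod_eq_iff)
qed

theorem lemma4p6:
  fixes \<Omega> :: "(real \<times> real) set"
    and M :: "'s measure"
    and X :: "nat \<Rightarrow> 's \<Rightarrow> real \<times> real"
    and r :: nat and a \<epsilon>1 :: real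
  assumes "compact \<Omega>"
    and "measure lborel \<Omega> > 0"
    and "\<epsilon>1 \<ge> 0"
    and "\<exists>C. finite C \<and> \<Omega> \<subseteq> (\<Union>m\<in>C. Q1 m) \<and> real (card C) \<le> measure lborel \<Omega> + \<epsilon>1"
    and "prob_space M"
    and "prob_space.indep_vars M (\<lambda>_. lborel) X {..<r}"
    and "\<And>j. j < r \<Longrightarrow> distr M lborel (X j) = uniform_measure lborel \<Omega>"
    and "a > 1 / measure lborel \<Omega>"
  shows "measure M {\<omega> \<in> space M. real (N0 r (\<lambda>j. X j \<omega>)) > a * real r}
         \<le> (measure lborel \<Omega> + \<epsilon>1) *
           exp (- real r * (a * ln (a * measure lborel \<Omega>) - (a - 1 / measure lborel \<Omega>)))"
proof -
  interpret prob_space M by fact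
  define \<mu> where "\<mu> = measure lborel \<Omega>"
  have mu: "\<mu> > 0" using assms(2) by (simp add: \<mu>_def)
  obtain C where C: "finite C" "\<Omega> \<subseteq> (\<Union>m\<in>C. Q1 m)" "real (card C) \<le> \<mu> + \<epsilon>1"
    using assms(4) unfolding \<mu>_def by blast
  have Ob: "\<Omega> \<in> sets borel" using assms(1) by (intro borel_closed compact_imp_closed)
  have Ofin: "emeasure lborel \<Omega> \<noteq> \<infinity>"
    using emeasure_bounded_finite[OF compact_imp_bounded[OF assms(1)]] by simp
  have Onz: "emeasure lborel \<Omega> \<noteq> 0"
    using assms(2) by (auto simp: measure_def)
  have rv: "X j \<in> measurable M borel" if "j < r" for j
    using assms(6) that unfolding indep_vars_def by auto
  have pt: "prob (X j -` S \<inter> space M) = measure lborel (\<Omega> \<inter> S) / \<mu>"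
    if j: "j < r" and S: "S \<in> sets borel" for j S
  proof -
    have "prob (X j -` S \<inter> space M) = measure (distr M lborel (X j)) S"
      using rv[OF j] S by (subst measure_distr) auto
    also have "\<dots> = measure lborel (\<Omega> \<inter> S) / \<mu>"
      using assms(7)[OF j] Ofin Onz S by (simp add: \<mu>_def)
    finally show ?thesis .
  qed
  define B where "B = (\<Union>j<r. X j -` (gridL \<union> - \<Omega>) \<inter> space M)"
  have gridL_sets: "gridL \<in> sets borel" using gridL_null by (auto simp: null_sets_def)
  have Bset: "X j -` (gridL \<union> - \<Omega>) \<inter> space M \<in> events" if "j < r" for j
    using rv[OF that] gridL_sets Ob by (intro measurable_sets) auto
  have B0: "prob (X j -` (gridL \<union> - \<Omega>) \<inter> space M) = 0" if j: "j < r" for j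
  proof -
    have "\<Omega> \<inter> (gridL \<union> - \<Omega>) = \<Omega> \<inter> gridL" by auto
    moreover have "\<Omega> \<inter> gridL \<in> null_sets lborel"
      using gridL_null Ob by (auto intro: null_set_Int1 null_set_Int2)
    ultimately have "measure lborel (\<Omega> \<inter> (gridL \<union> - \<Omega>)) = 0"
      by (simp add: measure_def null_setsD1)
    moreover have "gridL \<union> - \<Omega> \<in> sets borel" using gridL_sets Ob by auto
    ultimately show ?thesis using pt[OF j, of "gridL \<union> - \<Omega>"] by simp
  qed
  have Bm: "B \<in> events" unfolding B_def using Bset by (intro sets.finite_UN) auto
  have PB: "prob B = 0"
  proof -
    have "prob B \<le> (\<Sum>j<r. prob (X j -` (gridL \<union> - \<Omega>) \<inter> space M))"
      unfolding B_def by (intro measure_UNION_le) (use Bset in auto)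
    also have "\<dots> = 0" using B0 by simp
    finally show ?thesis by (simp add: measure_le_0_iff)
  qed
  define E' where "E' c = {\<omega>\<in>space M. a * real r \<le> (\<Sum>j<r. indicator (Q1 c) (X j \<omega>) :: real)}" for c
  have E'm: "E' c \<in> events" for c
  proof -
    have "(\<lambda>\<omega>. (\<Sum>j<r. indicator (Q1 c) (X j \<omega>) :: real)) \<in> borel_measurable M"
      by (intro borel_measurable_sum measurable_compose[OF rv borel_measurable_indicator] Q1_closed) auto
    then show ?thesis unfolding E'_def by measurable
  qed
  have apos: "a > 0" using assms(8) mu by (simp add: \<mu>_def) (smt (verit) divide_pos_pos)
  define t where "t = ln (a * \<mu>)"
  have amu: "a * \<mu> > 1" using assms(8) mu by (simp add: \<mu>_def field_simps)
  have t: "t > 0" unfolding t_def using amu by simp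
  have et: "exp t = a * \<mu>" unfolding t_def using amu by simp
  define bound where "bound = exp (- real r * (a * ln (a * \<mu>) - (a - 1 / \<mu>)))"
  have PE': "prob (E' c) \<le> bound" for c
  proof -
    have p: "prob (X j -` Q1 c \<inter> space M) \<le> 1 / \<mu>" if "j < r" for j
    proof -
      have "measure lborel (\<Omega> \<inter> Q1 c) \<le> measure lborel (Q1 c)"
        using Q1_closed[of c] Q1_measure[of c] Ob
          emeasure_bounded_finite[of "Q1 c"] bounded_Times[of "{real_of_int (fst c) - 1/2 .. real_of_int (fst c) + 1/2}" "{real_of_int (snd c) - 1/2 .. real_of_int (snd c) + 1/2}"]
        unfolding Q1_def[symmetric]
        by (intro measure_mono_fmeasurable) (auto simp: fmeasurable_def)
      then show ?thesis using pt[OF that Q1_closed] mu Q1_measure[of c]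
        by (simp add: divide_right_mono)
    qed
    have "prob (E' c) \<le> exp (-t * (a * real r)) * exp (real r * (1/\<mu> * (exp t - 1)))"
      unfolding E'_def by (rule chernoff_count[OF assms(6) Q1_closed t _ p]) (use mu in auto)
    also have "\<dots> = bound"
      unfolding bound_def et using mu
      by (simp add: t_def flip: exp_add) (simp add: field_simps)
    finally show ?thesis .
  qed
  have sub: "{\<omega> \<in> space M. real (N0 r (\<lambda>j. X j \<omega>)) > a * real r} \<subseteq> B \<union> (\<Union>c\<in>C. E' c)"
  proof
    fix \<omega> assume w: "\<omega> \<in> {\<omega> \<in> space M. real (N0 r (\<lambda>j. X j \<omega>)) > a * real r}"
    show "\<omega> \<in> B \<union> (\<Union>c\<in>C. E' c)"
    proof (cases "\<omega> \<in> B")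
      case False
      then have good: "X j \<omega> \<in> \<Omega>" "X j \<omega> \<notin> gridL" if "j < r" for j
        using w that unfolding B_def by auto
      define f where "f m = card {j \<in> {..<r}. X j \<omega> \<in> Q1 m}" for m
      have fin: "finite (range f)"
        by (rule finite_subset[of _ "{..r}"]) (auto simp: f_def intro!: card_mono[of "{..<r}", simplified])
      have "Sup (range f) \<in> range f"
        using fin by (simp add: cSup_eq_Max)
      then obtain m where m: "N0 r (\<lambda>j. X j \<omega>) = f m" by (auto simp: N0_def f_def)
      have big: "real (f m) > a * real r" using w m by simp
      then have "f m > 0" using apos by (smt (verit) mult_nonneg_nonneg of_nat_0 of_nat_0_le_iff gr0I)
      then obtain j where j: "j < r" "X j \<omega> \<in> Q1 m" unfolding f_def
        by (metis (no_types, lifting) card_gt_0_iff empty_Collect_eq lessThan_iff mem_Collect_eq)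
      then obtain c where c: "c \<in> C" "X j \<omega> \<in> Q1 c" using C(2) good(1)[OF j(1)] by blast
      have "m = c" using Q1_unique[OF j(2) c(2) good(2)[OF j(1)]] .
      have "(\<Sum>j<r. indicator (Q1 c) (X j \<omega>) :: real) = real (f m)"
        unfolding f_def \<open>m = c\<close> by (simp add: indicator_def sum.If_cases Int_def)
      then have "\<omega> \<in> E' c" using big w unfolding E'_def by simp
      then show ?thesis using c(1) by blast
    qed auto
  qed
  have "measure M {\<omega> \<in> space M. real (N0 r (\<lambda>j. X j \<omega>)) > a * real r} \<le> prob (B \<union> (\<Union>c\<in>C. E' c))"
    by (rule finite_measure_mono[OF sub]) (use Bm E'm C(1) in auto)
  also have "\<dots> \<le> prob B + prob (\<Union>c\<in>C. E' c)"
    by (rule measure_Un_le) (use Bm E'm C(1) in auto)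
  also have "\<dots> \<le> 0 + (\<Sum>c\<in>C. prob (E' c))"
    using PB by (simp add: measure_UNION_le C(1) E'm)
  also have "\<dots> \<le> (\<Sum>c\<in>C. bound)"
    by (simp only: add_0_left) (rule sum_mono, rule PE')
  also have "\<dots> = real (card C) * bound" by simp
  also have "\<dots> \<le> (\<mu> + \<epsilon>1) * bound"
    using C(3) by (intro mult_right_mono) (auto simp: bound_def)
  finally show ?thesis by (simp add: bound_def \<mu>_def)
qed

end
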